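(* Let $n\ge2$ and for $P\in\mathrm{Mat}(n^2,\mathbb{C})$ put $P_1=P\otimes I_n$, $P_2=I_n\otimes P$. (a) Let $Q>0$ be real and let $P$ be a nontrivial solution of rank $r$ to $$P^*=P,\quad P^2=P,\quad Q^2(P_1P_2P_1-P_2P_1P_2)=P_1-P_2 .\qquad(\ast)$$ Let $k=\tfrac12\operatorname{rank}(P_1-P_2)$. Then for all integers $m\ge1$, $$\operatorname{tr}_3\big((P_1P_2)^m\big)=rn+(Q^{-2m}-1)\,k .$$ (b) Let $P$ be an orthogonal projection of rank $r$. If there exist a real constant $Q>1$ and a positive integer $k$ such that $\operatorname{tr}_3\big((P_1P_2)^m\big)=rn+(Q^{-2m}-1)k$ holds for $m=1,2,3$, then $P$ is a nontrivial solution of $(\ast)$ for this $Q$.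
   Context: $I_n$ is the $n\times n$ identity matrix, $\otimes$ the Kronecker product, $\operatorname{tr}_3$ the matrix trace on $\mathrm{Mat}(n^3,\mathbb{C})$. A solution of $(\ast)$ is trivial if $P=0$ or $P=I_n\otimes I_n$, nontrivial otherwise. *)

theory Defs
  imports "Jordan_Normal_Form.Schur_Decomposition" "Jordan_Normal_Form.DL_Rank"
begin

definition kron_mat :: "'a :: times mat \<Rightarrow> 'a mat \<Rightarrow> 'a mat" where
  "kron_mat A B = mat (dim_row A * dim_row B) (dim_col A * dim_col B)
     (\<lambda>(i,j). A $$ (i div dim_row B, j div dim_col B) * B $$ (i mod dim_row B, j mod dim_col B))"

definition P1 :: "nat \<Rightarrow> complex mat \<Rightarrow> complex mat" where
  "P1 n P = kron_mat P (1\<^sub>m n)"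

definition P2 :: "nat \<Rightarrow> complex mat \<Rightarrow> complex mat" where
  "P2 n P = kron_mat (1\<^sub>m n) P"

definition mat_trace :: "'a :: comm_monoid_add mat \<Rightarrow> 'a" where
  "mat_trace A = (\<Sum>i<dim_row A. A $$ (i,i))"

definition crank :: "complex mat \<Rightarrow> nat" where
  "crank A = vec_space.rank (dim_row A) A"

definition is_solution :: "nat \<Rightarrow> real \<Rightarrow> complex mat \<Rightarrow> bool" where
  "is_solution n Q P \<longleftrightarrow>
     mat_adjoint P = P \<and> P * P = P \<and>
     (complex_of_real Q)^2 \<cdot>\<^sub>m (P1 n P * P2 n P * P1 n P - P2 n P * P1 n P * P2 n P)
       = P1 n P - P2 n P"

definition nontrivial :: "nat \<Rightarrow> complex mat \<Rightarrow> bool" where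
  "nontrivial n P \<longleftrightarrow> P \<noteq> 0\<^sub>m (n^2) (n^2) \<and> P \<noteq> kron_mat (1\<^sub>m n) (1\<^sub>m n)"

end

theory Submission imports Defs begin


lemma trace_comm:
  fixes A B :: "'a::comm_ring mat"
  assumes A: "A \<in> carrier_mat m k" and B: "B \<in> carrier_mat k m"
  shows "mat_trace (A * B) = mat_trace (B * A)"
proof -
  have "mat_trace (A * B) = (\<Sum>i<m. \<Sum>j<k. A $$ (i,j) * B $$ (j,i))"
    unfolding mat_trace_def using A B
    by (auto simp: scalar_prod_def intro!: sum.cong simp: lessThan_atLeast0)
  also have "\<dots> = (\<Sum>j<k. \<Sum>i<m. B $$ (j,i) * A $$ (i,j))"
    by (subst sum.swap) (simp add: mult.commute)
  also have "\<dots> = mat_trace (B * A)"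
    unfolding mat_trace_def using A B
    by (auto simp: scalar_prod_def intro!: sum.cong simp: lessThan_atLeast0)
  finally show ?thesis .
qed

context vec_space
begin

lemma col_space_mult_subset:
  assumes A: "A \<in> carrier_mat n na" and B: "B \<in> carrier_mat n nb" and X: "X \<in> carrier_mat nb na"
  and AB: "A = B * X"
  shows "col_space A \<subseteq> col_space B"
proof
  fix y assume "y \<in> col_space A"
  then obtain x where x: "x \<in> carrier_vec na" "A *\<^sub>v x = y" and y: "y \<in> carrier_vec n"
    using col_space_eq[OF A] A by auto
  have "B *\<^sub>v (X *\<^sub>v x) = y" using AB x X B by auto
  moreover have "X *\<^sub>v x \<in> carrier_vec nb" using X x by auto
  ultimately show "y \<in> col_space B" using col_space_eq[OF B] B y by auto
qed

lemma rank_eq_mult: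
  assumes A: "A \<in> carrier_mat n na" and B: "B \<in> carrier_mat n nb"
  and X: "X \<in> carrier_mat nb na" and Y: "Y \<in> carrier_mat na nb"
  and AB: "A = B * X" and BA: "B = A * Y"
  shows "rank A = rank B"
proof -
  have "col_space A = col_space B"
    using col_space_mult_subset[OF A B X AB] col_space_mult_subset[OF B A Y BA] by auto
  then show ?thesis unfolding rank_def col_space_def by simp
qed

lemma span_maximal:
  assumes S: "maximal S (\<lambda>T. T \<subseteq> set (cols E) \<and> lin_indpt T)" and E: "E \<in> carrier_mat n nc"
  and c: "c \<in> set (cols E)"
  shows "c \<in> span S"
proof (rule ccontr)
  assume nc: "c \<notin> span S"
  have SE: "S \<subseteq> set (cols E)" and li: "lin_indpt S" using S unfolding maximal_def by auto
  have Sc: "S \<subseteq> carrier_vec n" using SE E cols_dim by blast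
  have cc: "c \<in> carrier_vec n" using c E cols_dim by blast
  have cS: "c \<notin> S" using nc span_mem[of S c] Sc by auto
  have "lin_indpt (S \<union> {c})" using lin_dep_iff_in_span[of S c] Sc li cc cS nc by auto
  then have "S \<union> {c} = S" using S c SE unfolding maximal_def by blast
  then show False using cS by auto
qed

lemma rank_idem:
  fixes E :: "'a mat"
  assumes E: "E \<in> carrier_mat n n" and EE: "E * E = E"
  shows "of_nat (rank E) = mat_trace E"
proof -
  have "lin_indpt {}" unfolding lin_dep_def by auto
  then obtain S where fS: "finite S" and S: "maximal S (\<lambda>T. T \<subseteq> set (cols E) \<and> lin_indpt T)"
    using maximal_exists_superset[of "set (cols E)" "\<lambda>T. T \<subseteq> set (cols E) \<and> lin_indpt T" "{}"]
    by auto
  have SE: "S \<subseteq> set (cols E)" and li: "lin_indpt S" using S unfolding maximal_def by auto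
  obtain vs where vs: "set vs = S" "distinct vs" using finite_distinct_list[OF fS] by auto
  define r where "r = length vs"
  define V where "V = mat_of_cols n vs"
  have Sc: "S \<subseteq> carrier_vec n" using SE E cols_dim by blast
  have V: "V \<in> carrier_mat n r" unfolding V_def r_def by simp
  have cV: "cols V = vs" unfolding V_def using vs Sc by simp
  have spanS: "col_space V = span S" unfolding col_space_def cV vs by simp
  have ex: "\<exists>x \<in> carrier_vec r. V *\<^sub>v x = col E j" if j: "j < n" for j
  proof -
    have "col E j \<in> set (cols E)" using j E by (auto simp: in_set_conv_nth intro!: exI[of _ j])
    then have "col E j \<in> span S" by (rule span_maximal[OF S E])
    then have "col E j \<in> col_space V" using spanS by simp
    then show ?thesis using col_space_eq[OF V] V by auto
  qed
  define xs where "xs = (\<lambda>j. SOME x. x \<in> carrier_vec r \<and> V *\<^sub>v x = col E j)"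
  have xs: "xs j \<in> carrier_vec r" "V *\<^sub>v xs j = col E j" if "j < n" for j
    using someI_ex[OF ex[OF that, unfolded Bex_def]] unfolding xs_def by auto
  define W where "W = mat r n (\<lambda>(i,j). xs j $ i)"
  have W: "W \<in> carrier_mat r n" unfolding W_def by simp
  have colW: "col W j = xs j" if "j < n" for j
    using xs[OF that] that unfolding W_def by (auto simp: col_def)
  have VW: "V * W = E"
  proof (rule eq_matI)
    fix i j assume i: "i < dim_row E" and j: "j < dim_col E"
    have "(V * W) $$ (i,j) = col (V * W) j $ i" using i j V W E by auto
    also have "\<dots> = (V *\<^sub>v col W j) $ i"
    proof -
      have jn: "j < n" using j E by simp
      show ?thesis using col_mult2[OF V W jn] by (simp only:)
    qed
    also have "\<dots> = E $$ (i,j)" using colW xs i j E by auto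
    finally show "(V * W) $$ (i,j) = E $$ (i,j)" .
  qed (insert V W E, auto)
  have EV: "E * V = V"
  proof (rule eq_matI)
    fix i j assume i: "i < dim_row V" and j: "j < dim_col V"
    have "col V j \<in> set (cols E)" using j cV vs SE V by (metis cols_length cols_nth nth_mem subsetD)
    then obtain l where l: "l < n" "col V j = col E l" using E by (auto simp: in_set_conv_nth)
    have "(E * V) $$ (i,j) = col (E * V) j $ i" using i j V E by auto
    also have "\<dots> = (E *\<^sub>v col E l) $ i"
    proof -
      have jr: "j < r" using j V by simp
      show ?thesis using col_mult2[OF E V jr] l(2) by (simp only:)
    qed
    also have "\<dots> = col (E * E) l $ i" using col_mult2[OF E E l(1)] by (simp only:)
    also have "\<dots> = col V j $ i" using EE l by simp
    also have "\<dots> = V $$ (i,j)" using i j V by auto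
    finally show "(E * V) $$ (i,j) = V $$ (i,j)" .
  qed (insert V E, auto)
  have inj: "x = 0\<^sub>v r" if x: "x \<in> carrier_vec r" "V *\<^sub>v x = 0\<^sub>v n" for x
  proof (rule ccontr)
    assume "x \<noteq> 0\<^sub>v r"
    then have "lin_dep (set (cols V))" using lin_depI[OF V x(1) _ x(2)] cV vs by auto
    then show False using li cV vs by simp
  qed
  have WV: "W * V = 1\<^sub>m r"
  proof (rule eq_matI)
    fix i j assume i: "i < dim_row (1\<^sub>m r)" and j: "j < dim_col (1\<^sub>m r)"
    then have i: "i < r" and j: "j < r" by auto
    define z where "z = col (W * V) j - unit_vec r j"
    have WVc: "W * V \<in> carrier_mat r r" using W V by (rule mult_carrier_mat)
    have c1: "col (W * V) j \<in> carrier_vec r" by (rule col_carrier_vec[OF j WVc])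
    have c2: "unit_vec r j \<in> carrier_vec r" by simp
    have z: "z \<in> carrier_vec r" unfolding z_def using c1 c2 by simp
    have "V *\<^sub>v z = V *\<^sub>v col (W * V) j - V *\<^sub>v unit_vec r j"
      unfolding z_def by (rule mult_minus_distrib_mat_vec[OF V c1 c2])
    also have "V *\<^sub>v col (W * V) j = col (V * (W * V)) j"
      by (rule col_mult2[symmetric, OF V WVc j])
    also have "V * (W * V) = (V * W) * V" by (rule assoc_mult_mat[symmetric, OF V W V])
    also have "\<dots> = V" unfolding VW EV ..
    also have "V *\<^sub>v unit_vec r j = col V j"
    proof -
      have "col (V * 1\<^sub>m r) j = V *\<^sub>v col (1\<^sub>m r) j" by (rule col_mult2[OF V one_carrier_mat j])
      then show ?thesis using j right_mult_one_mat[OF V] by simp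
    qed
    also have "col V j - col V j = 0\<^sub>v n" by (rule minus_cancel_vec[OF col_carrier_vec[OF j V]])
    finally have "V *\<^sub>v z = 0\<^sub>v n" .
    then have "z = 0\<^sub>v r" using inj z by auto
    then have "z $ i = 0" using i by simp
    moreover have "z $ i = col (W * V) j $ i - unit_vec r j $ i"
      unfolding z_def using c1 c2 i by simp
    moreover have "col (W * V) j $ i = (W * V) $$ (i,j)"
      using WVc i j by (intro index_col) auto
    ultimately show "(W * V) $$ (i,j) = 1\<^sub>m r $$ (i,j)" using i j by (simp split: if_splits)
  qed (insert W V, auto)
  have WVc: "W * V \<in> carrier_mat r r" using W V by (rule mult_carrier_mat)
  have "mat_trace E = mat_trace (V * W)" using VW by simp
  also have "\<dots> = mat_trace (W * V)" by (rule trace_comm[OF V W])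
  also have "\<dots> = of_nat r" unfolding WV mat_trace_def by simp
  finally have tr: "mat_trace E = of_nat r" .
  have "rank E = rank V" by (rule rank_eq_mult[OF E V W V VW[symmetric] EV[symmetric]])
  also have "rank V = r" using lin_indpt_full_rank[OF V] cV vs li by simp
  finally show ?thesis using tr by simp
qed
end


lemma lt_helper: "x < b \<Longrightarrow> y < d \<Longrightarrow> x * d + y < b * (d::nat)"
proof -
  assume "x < b" "y < d"
  then have "x * d + y < (x+1) * d" by simp
  also have "\<dots> \<le> b * d" using \<open>x < b\<close> by (intro mult_right_mono) auto
  finally show ?thesis .
qed

lemma sum_div_mod:
  fixes g :: "nat \<Rightarrow> nat \<Rightarrow> 'a::comm_monoid_add"
  assumes d: "d > 0"
  shows "(\<Sum>k<b*d. g (k div d) (k mod d)) = (\<Sum>k1<b. \<Sum>k2<d. g k1 k2)"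
proof -
  have "(\<Sum>k1<b. \<Sum>k2<d. g k1 k2) = (\<Sum>p\<in>{..<b} \<times> {..<d}. g (fst p) (snd p))"
    by (simp add: sum.cartesian_product case_prod_beta)
  also have "\<dots> = (\<Sum>k<b*d. g (k div d) (k mod d))"
    apply (rule sum.reindex_bij_witness[where i="\<lambda>k. (k div d, k mod d)" and j="\<lambda>p. fst p * d + snd p"])
    subgoal for p using d by (cases p) auto
    subgoal for p using d by (cases p) (auto intro: lt_helper)
    subgoal by simp
    subgoal for k using d by (auto simp: less_mult_imp_div_less)
    subgoal for p using d by (cases p) auto
    done
  finally show ?thesis by simp
qed

lemma kron_carrier[simp]:
  "A \<in> carrier_mat a b \<Longrightarrow> B \<in> carrier_mat c d \<Longrightarrow> kron_mat A B \<in> carrier_mat (a*c) (b*d)"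
  unfolding kron_mat_def by auto

lemma kron_dims[simp]: "dim_row (kron_mat A B) = dim_row A * dim_row B"
  "dim_col (kron_mat A B) = dim_col A * dim_col B"
  unfolding kron_mat_def by auto

lemma kron_index:
  assumes "A \<in> carrier_mat a b" "B \<in> carrier_mat c d" "i < a*c" "j < b*d"
  shows "kron_mat A B $$ (i,j) = A $$ (i div c, j div d) * B $$ (i mod c, j mod d)"
  using assms unfolding kron_mat_def by auto

lemma kron_mult:
  fixes A B C D :: "'a::comm_ring_1 mat"
  assumes A: "A \<in> carrier_mat a b" and B: "B \<in> carrier_mat c d"
  and C: "C \<in> carrier_mat b e" and D: "D \<in> carrier_mat d f" and d: "d > 0" and c: "c > 0" and f: "f > 0"
  shows "kron_mat A B * kron_mat C D = kron_mat (A * C) (B * D)"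
proof (rule eq_matI)
  fix i j assume i: "i < dim_row (kron_mat (A * C) (B * D))" and j: "j < dim_col (kron_mat (A * C) (B * D))"
  have i: "i < a * c" and j: "j < e * f" using i j A B C D by (auto simp: kron_mat_def)
  have i1: "i div c < a" using i c by (simp add: less_mult_imp_div_less)
  have j1: "j div f < e" using j f by (simp add: less_mult_imp_div_less)
  have i2: "i mod c < c" using c by simp
  have j2: "j mod f < f" using f by simp
  have "(kron_mat A B * kron_mat C D) $$ (i,j) =
    (\<Sum>k<b*d. kron_mat A B $$ (i,k) * kron_mat C D $$ (k,j))"
    using A B C D i j by (auto simp: scalar_prod_def lessThan_atLeast0 intro!: sum.cong)
  also have "\<dots> = (\<Sum>k<b*d. (A $$ (i div c, k div d) * C $$ (k div d, j div f)) *
      (B $$ (i mod c, k mod d) * D $$ (k mod d, j mod f)))"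
  proof (rule sum.cong[OF refl])
    fix k assume k: "k \<in> {..<b*d}"
    then have k': "k < b * d" by simp
    show "kron_mat A B $$ (i,k) * kron_mat C D $$ (k,j) = (A $$ (i div c, k div d) * C $$ (k div d, j div f)) *
      (B $$ (i mod c, k mod d) * D $$ (k mod d, j mod f))"
      by (simp add: kron_index[OF A B i k'] kron_index[OF C D k' j] ac_simps)
  qed
  also have "\<dots> = (\<Sum>k1<b. \<Sum>k2<d. (A $$ (i div c, k1) * C $$ (k1, j div f)) *
      (B $$ (i mod c, k2) * D $$ (k2, j mod f)))"
    by (rule sum_div_mod[OF d])
  also have "\<dots> = (\<Sum>k1<b. A $$ (i div c, k1) * C $$ (k1, j div f)) * (\<Sum>k2<d. B $$ (i mod c, k2) * D $$ (k2, j mod f))"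
    by (simp add: sum_product)
  also have "\<dots> = (A * C) $$ (i div c, j div f) * (B * D) $$ (i mod c, j mod f)"
    using A B C D i1 j1 i2 j2 by (simp add: scalar_prod_def lessThan_atLeast0)
  also have "\<dots> = kron_mat (A * C) (B * D) $$ (i,j)"
    using kron_index[of "A * C" a e "B * D" c f i j] A B C D i j by simp
  finally show "(kron_mat A B * kron_mat C D) $$ (i,j) = kron_mat (A * C) (B * D) $$ (i,j)" .
qed (insert A B C D, auto simp: kron_mat_def)

lemma kron_trace:
  fixes A B :: "'a::comm_ring_1 mat"
  assumes A: "A \<in> carrier_mat a a" and B: "B \<in> carrier_mat c c" and c: "c > 0"
  shows "mat_trace (kron_mat A B) = mat_trace A * mat_trace B"
proof -
  have "mat_trace (kron_mat A B) = (\<Sum>k<a*c. A $$ (k div c, k div c) * B $$ (k mod c, k mod c))"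
    unfolding mat_trace_def using A B by (auto simp: kron_mat_def intro!: sum.cong)
  also have "\<dots> = (\<Sum>k1<a. \<Sum>k2<c. A $$ (k1,k1) * B $$ (k2,k2))" by (rule sum_div_mod[OF c])
  also have "\<dots> = mat_trace A * mat_trace B" unfolding mat_trace_def using A B by (simp add: sum_product)
  finally show ?thesis .
qed

lemma kron_one: assumes "b > 0" shows "kron_mat (1\<^sub>m a) (1\<^sub>m b) = (1\<^sub>m (a*b) :: 'a::comm_ring_1 mat)"
proof (rule eq_matI)
  fix i j assume i: "i < dim_row (1\<^sub>m (a*b) :: 'a mat)" and j: "j < dim_col (1\<^sub>m (a*b) :: 'a mat)"
  then have i: "i < a*b" and j: "j < a*b" by auto
  have "(i div b = j div b \<and> i mod b = j mod b) = (i = j)" by (metis div_mult_mod_eq)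
  moreover have "i div b < a" "j div b < a" using i j assms by (auto simp: less_mult_imp_div_less)
  moreover have "kron_mat (1\<^sub>m a) (1\<^sub>m b) $$ (i,j) = (1\<^sub>m a :: 'a mat) $$ (i div b, j div b) * (1\<^sub>m b :: 'a mat) $$ (i mod b, j mod b)"
    by (rule kron_index) (use i j in auto)
  moreover have "i mod b < b" "j mod b < b" using assms by auto
  ultimately show "kron_mat (1\<^sub>m a) (1\<^sub>m b) $$ (i,j) = (1\<^sub>m (a*b) :: 'a mat) $$ (i,j)"
    using i j by auto
qed (auto simp: kron_mat_def)

lemma kron_zero: assumes "B \<in> carrier_mat c d" shows "kron_mat (0\<^sub>m a b) B = (0\<^sub>m (a*c) (b*d) :: 'a::comm_ring_1 mat)"
  by (rule eq_matI) (insert assms, auto simp: kron_mat_def less_mult_imp_div_less)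

lemma adj_carrier[simp]: "A \<in> carrier_mat a b \<Longrightarrow> mat_adjoint A \<in> carrier_mat b a"
  unfolding mat_adjoint_def by auto

lemma adj_dims[simp]: "dim_row (mat_adjoint A) = dim_col A" "dim_col (mat_adjoint A) = dim_row A"
  unfolding mat_adjoint_def by auto

lemma adj_index[simp]: "i < dim_col A \<Longrightarrow> j < dim_row A \<Longrightarrow> mat_adjoint A $$ (i,j) = cnj (A $$ (j,i))"
  unfolding mat_adjoint_def by (simp add: mat_of_rows_index)

lemma adj_mult:
  fixes A B :: "complex mat"
  assumes A: "A \<in> carrier_mat a b" and B: "B \<in> carrier_mat b c"
  shows "mat_adjoint (A * B) = mat_adjoint B * mat_adjoint A"
  by (rule eq_matI) (insert A B, auto simp: scalar_prod_def ac_simps intro!: sum.cong)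

lemma adj_minus:
  fixes A B :: "complex mat"
  assumes A: "A \<in> carrier_mat a b" and B: "B \<in> carrier_mat a b"
  shows "mat_adjoint (A - B) = mat_adjoint A - mat_adjoint B"
  by (rule eq_matI) (insert A B, auto)

lemma adj_smult:
  fixes A :: "complex mat"
  shows "mat_adjoint (c \<cdot>\<^sub>m A) = cnj c \<cdot>\<^sub>m mat_adjoint A"
  by (rule eq_matI) auto

lemma adj_one: "mat_adjoint (1\<^sub>m n :: complex mat) = 1\<^sub>m n"
  by (rule eq_matI) auto

lemma adj_kron:
  fixes A B :: "complex mat"
  assumes A: "A \<in> carrier_mat a b" and B: "B \<in> carrier_mat c d" and c: "c > 0" and d: "d > 0"
  shows "mat_adjoint (kron_mat A B) = kron_mat (mat_adjoint A) (mat_adjoint B)"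
proof (rule eq_matI)
  fix i j assume i: "i < dim_row (kron_mat (mat_adjoint A) (mat_adjoint B))"
    and j: "j < dim_col (kron_mat (mat_adjoint A) (mat_adjoint B))"
  have i: "i < b * d" and j: "j < a * c" using i j A B by (auto simp: kron_mat_def)
  have "i div d < b" "j div c < a" using i j c d by (auto simp: less_mult_imp_div_less)
  then show "mat_adjoint (kron_mat A B) $$ (i,j) = kron_mat (mat_adjoint A) (mat_adjoint B) $$ (i,j)"
    using i j A B c d
    by (simp add: kron_index[OF adj_carrier[OF A] adj_carrier[OF B] i j] kron_index[OF A B j i])
qed (insert A B, auto simp: kron_mat_def)

lemma frob:
  fixes M :: "complex mat"
  assumes M: "M \<in> carrier_mat a b" and z: "mat_trace (M * mat_adjoint M) = 0"
  shows "M = 0\<^sub>m a b"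
proof -
  have "mat_trace (M * mat_adjoint M) = (\<Sum>i<a. \<Sum>j<b. M $$ (i,j) * cnj (M $$ (i,j)))"
    unfolding mat_trace_def using M
    by (auto simp: scalar_prod_def lessThan_atLeast0 intro!: sum.cong)
  also have "\<dots> = (\<Sum>i<a. \<Sum>j<b. complex_of_real ((cmod (M $$ (i,j)))^2))"
    by (intro sum.cong refl) (simp only: complex_norm_square)
  also have "\<dots> = complex_of_real (\<Sum>i<a. \<Sum>j<b. (cmod (M $$ (i,j)))^2)" by simp
  finally have "complex_of_real (\<Sum>i<a. \<Sum>j<b. (cmod (M $$ (i,j)))^2) = 0" using z by metis
  then have "(\<Sum>i<a. \<Sum>j<b. (cmod (M $$ (i,j)))^2) = 0" by (simp only: of_real_eq_0_iff)
  then have "\<forall>i\<in>{..<a}. (\<Sum>j<b. (cmod (M $$ (i,j)))^2) = 0"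
    by (subst (asm) sum_nonneg_eq_0_iff) (auto intro: sum_nonneg)
  then have "\<forall>i<a. \<forall>j<b. (cmod (M $$ (i,j)))^2 = 0"
    by (auto simp: sum_nonneg_eq_0_iff)
  then show ?thesis using M by (intro eq_matI) auto
qed



lemma smult_smult_mat: "c \<cdot>\<^sub>m (d \<cdot>\<^sub>m X) = (c * d) \<cdot>\<^sub>m (X :: 'a::comm_ring_1 mat)"
  by (rule eq_matI) auto

lemma one_smult_mat': "1 \<cdot>\<^sub>m X = (X :: 'a::comm_ring_1 mat)"
  by (rule eq_matI) auto

lemma trace_minus: "X \<in> carrier_mat n n \<Longrightarrow> Y \<in> carrier_mat n n \<Longrightarrow> mat_trace (X - Y) = mat_trace X - mat_trace (Y :: 'a::comm_ring_1 mat)"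
  unfolding mat_trace_def by (simp add: sum_subtractf)
lemma trace_add: "X \<in> carrier_mat n n \<Longrightarrow> Y \<in> carrier_mat n n \<Longrightarrow> mat_trace (X + Y) = mat_trace X + mat_trace (Y :: 'a::comm_ring_1 mat)"
  unfolding mat_trace_def by (simp add: sum.distrib)
lemma trace_smult: "X \<in> carrier_mat n n \<Longrightarrow> mat_trace (c \<cdot>\<^sub>m X) = c * mat_trace (X :: 'a::comm_ring_1 mat)"
  unfolding mat_trace_def by (simp add: sum_distrib_left)
lemma trace_one: "mat_trace (1\<^sub>m n :: 'a::comm_ring_1 mat) = of_nat n"
  unfolding mat_trace_def by simp
lemma trace_zero: "mat_trace (0\<^sub>m n n :: 'a::comm_ring_1 mat) = 0"
  unfolding mat_trace_def by simp

lemma aux_half: "t - (1 - x) * r / 2 = t + (x - 1) * r / (2::complex)"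
  by (simp add: field_simps)

lemma poly_id: "q^2*t - (2*q+q^2)*(t + (q-1)*k) + (1+2*q)*(t + (q^2-1)*k) - (t + (q^3-1)*k) = (0::complex)"
  by (simp add: algebra_simps power2_eq_square power3_eq_cube)

lemma lin_lemma:
  fixes x y w a c z q :: complex
  assumes "x - w = q * (a - z)" "y - w = q * (c - z)"
  shows "x - y = q * (a - c)"
proof -
  have "x - y = (x - w) - (y - w)" by simp
  also have "\<dots> = q * (a - z) - q * (c - z)" using assms by simp
  also have "\<dots> = q * (a - c)" by (simp add: algebra_simps)
  finally show ?thesis .
qed

lemma entry_of: "X = Y \<Longrightarrow> X $$ (i,j) = Y $$ (i,j)" by simp

locale sqm = fixes N :: nat
begin
abbreviation "CC \<equiv> carrier_mat N N :: complex mat set"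
lemma cl_mult[simp]: "X \<in> CC \<Longrightarrow> Y \<in> CC \<Longrightarrow> X * Y \<in> CC" by auto
lemma cl_add[simp]: "X \<in> CC \<Longrightarrow> Y \<in> CC \<Longrightarrow> X + Y \<in> CC" by auto
lemma cl_minus[simp]: "X \<in> CC \<Longrightarrow> Y \<in> CC \<Longrightarrow> X - Y \<in> CC" by auto
lemma cl_smult[simp]: "X \<in> CC \<Longrightarrow> c \<cdot>\<^sub>m X \<in> CC" by auto
lemma cl_one[simp]: "1\<^sub>m N \<in> CC" by auto
lemma cl_zero[simp]: "0\<^sub>m N N \<in> CC" by auto
lemma cl_pow[simp]: "X \<in> CC \<Longrightarrow> X ^\<^sub>m k \<in> CC" by auto
lemma cl_adj[simp]: "X \<in> CC \<Longrightarrow> mat_adjoint X \<in> CC" by auto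
lemmas cl = cl_mult cl_add cl_minus cl_smult cl_one cl_zero cl_pow cl_adj

lemma d_add_r: "X \<in> CC \<Longrightarrow> Y \<in> CC \<Longrightarrow> Z \<in> CC \<Longrightarrow> X * (Y + Z) = X * Y + X * Z"
  by (simp add: mult_add_distrib_mat[of X N N Y N Z])
lemma d_add_l: "X \<in> CC \<Longrightarrow> Y \<in> CC \<Longrightarrow> Z \<in> CC \<Longrightarrow> (Y + Z) * X = Y * X + Z * X"
  by (simp add: add_mult_distrib_mat[of Y N N Z X N])
lemma d_minus_r: "X \<in> CC \<Longrightarrow> Y \<in> CC \<Longrightarrow> Z \<in> CC \<Longrightarrow> X * (Y - Z) = X * Y - X * Z"
  by (simp add: mult_minus_distrib_mat[of X N N Y N Z])
lemma d_minus_l: "X \<in> CC \<Longrightarrow> Y \<in> CC \<Longrightarrow> Z \<in> CC \<Longrightarrow> (Y - Z) * X = Y * X - Z * X"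
  by (simp add: minus_mult_distrib_mat[of Y N N Z X N])
lemma d_smult_r: "X \<in> CC \<Longrightarrow> Y \<in> CC \<Longrightarrow> X * (c \<cdot>\<^sub>m Y) = c \<cdot>\<^sub>m (X * Y)"
  by (simp add: mult_smult_distrib[of X N N Y N])
lemma d_smult_l: "X \<in> CC \<Longrightarrow> Y \<in> CC \<Longrightarrow> (c \<cdot>\<^sub>m X) * Y = c \<cdot>\<^sub>m (X * Y)"
  by (simp add: mult_smult_assoc_mat[of X N N Y N])
lemma d_assoc: "X \<in> CC \<Longrightarrow> Y \<in> CC \<Longrightarrow> Z \<in> CC \<Longrightarrow> (X * Y) * Z = X * (Y * Z)"
  by (simp add: assoc_mult_mat[of X N N Y N Z N])
lemma d_one_l: "X \<in> CC \<Longrightarrow> 1\<^sub>m N * X = X" by simp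
lemma d_one_r: "X \<in> CC \<Longrightarrow> X * 1\<^sub>m N = X" by simp

lemmas dist = d_add_r d_add_l d_minus_r d_minus_l d_smult_r d_smult_l d_assoc d_one_l d_one_r smult_smult_mat

lemma entry_eqI: "X \<in> CC \<Longrightarrow> Y \<in> CC \<Longrightarrow> (\<And>i j. i < N \<Longrightarrow> j < N \<Longrightarrow> X $$ (i,j) = Y $$ (i,j)) \<Longrightarrow> X = Y"
  by (rule eq_matI, auto)

lemma e_add: "X \<in> CC \<Longrightarrow> Y \<in> CC \<Longrightarrow> i < N \<Longrightarrow> j < N \<Longrightarrow> (X + Y) $$ (i,j) = X $$ (i,j) + Y $$ (i,j)" by auto
lemma e_minus: "X \<in> CC \<Longrightarrow> Y \<in> CC \<Longrightarrow> i < N \<Longrightarrow> j < N \<Longrightarrow> (X - Y) $$ (i,j) = X $$ (i,j) - Y $$ (i,j)" by auto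
lemma e_smult: "X \<in> CC \<Longrightarrow> i < N \<Longrightarrow> j < N \<Longrightarrow> (c \<cdot>\<^sub>m X) $$ (i,j) = c * X $$ (i,j)" by auto
lemma e_zero: "i < N \<Longrightarrow> j < N \<Longrightarrow> (0\<^sub>m N N :: complex mat) $$ (i,j) = 0" by auto
lemmas ent = e_add e_minus e_smult e_zero

lemma idem2: "A * A = A \<Longrightarrow> A \<in> CC \<Longrightarrow> Y \<in> CC \<Longrightarrow> A * (A * Y) = A * Y"
  by (metis d_assoc)

lemma X2:
  assumes A: "A \<in> CC" and B: "B \<in> CC" and AA: "A * A = A" and BB: "B * B = B"
  and H: "A * (B * A) - B * (A * B) = q \<cdot>\<^sub>m (A - B)"
  shows "A * (B * (A * (B * A))) = (1 + q) \<cdot>\<^sub>m (A * (B * A)) - q \<cdot>\<^sub>m A"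
proof -
  have AA2: "\<And>Y. Y \<in> CC \<Longrightarrow> A * (A * Y) = A * Y" using idem2[OF AA A] .
  have BB2: "\<And>Y. Y \<in> CC \<Longrightarrow> B * (B * Y) = B * Y" using idem2[OF BB B] .
  have e: "A * (A * (B * A) - B * (A * B)) * A = A * (q \<cdot>\<^sub>m (A - B)) * A" by (simp only: H)
  have e2: "A * (B * A) - A * (B * (A * (B * A))) = q \<cdot>\<^sub>m (A - A * (B * A))"
    using e by (simp only: dist AA AA2 BB BB2 A B cl)
  show ?thesis
  proof (rule entry_eqI)
    fix i j assume ij: "i < N" "j < N"
    from entry_of[OF e2, of i j] show "(A * (B * (A * (B * A)))) $$ (i, j) = ((1 + q) \<cdot>\<^sub>m (A * (B * A)) - q \<cdot>\<^sub>m A) $$ (i,j)"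
      by (simp only: ent ij A B cl) (simp add: algebra_simps del: index_mult_mat)
  qed (simp_all only: A B cl)
qed


fun ssum :: "complex \<Rightarrow> nat \<Rightarrow> complex" where
  "ssum q 0 = 0" | "ssum q (Suc m) = 1 + q * ssum q m"

lemma ssum_closed: "ssum q m * (1 - q) = 1 - q ^ m"
proof (induction m)
  case (Suc m)
  have "ssum q (Suc m) * (1 - q) = (1 - q) + q * (ssum q m * (1 - q))" by (simp add: algebra_simps)
  also have "\<dots> = (1 - q) + q * (1 - q ^ m)" using Suc by simp
  also have "\<dots> = 1 - q ^ Suc m" by (simp add: algebra_simps)
  finally show ?case .
qed simp

lemma Xpow:
  assumes A: "A \<in> CC" and X: "X \<in> CC" and AX: "A * X = X" and XX: "X * X = (1 + q) \<cdot>\<^sub>m X - q \<cdot>\<^sub>m A"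
  shows "X ^\<^sub>m (Suc m) = A - ssum q (Suc m) \<cdot>\<^sub>m (A - X)"
proof (induction m)
  case 0
  show ?case
  proof (rule entry_eqI)
    fix i j assume ij: "i < N" "j < N"
    have "X ^\<^sub>m (Suc 0) = X" using X by simp
    then show "(X ^\<^sub>m (Suc 0)) $$ (i,j) = (A - ssum q (Suc 0) \<cdot>\<^sub>m (A - X)) $$ (i,j)"
      by (simp only: ent ij A X cl) simp
  qed (simp_all only: A X cl)
next
  case (Suc m)
  have "X ^\<^sub>m (Suc (Suc m)) = (A - ssum q (Suc m) \<cdot>\<^sub>m (A - X)) * X"
    using Suc by simp
  also have "\<dots> = X - ssum q (Suc m) \<cdot>\<^sub>m (X - ((1 + q) \<cdot>\<^sub>m X - q \<cdot>\<^sub>m A))"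
    by (simp only: dist A X cl AX XX)
  also have "\<dots> = A - ssum q (Suc (Suc m)) \<cdot>\<^sub>m (A - X)"
  proof (rule entry_eqI)
    fix i j assume ij: "i < N" "j < N"
    show "(X - ssum q (Suc m) \<cdot>\<^sub>m (X - ((1 + q) \<cdot>\<^sub>m X - q \<cdot>\<^sub>m A))) $$ (i,j) = (A - ssum q (Suc (Suc m)) \<cdot>\<^sub>m (A - X)) $$ (i,j)"
      by (simp only: ent ij A X cl) (simp add: algebra_simps del: index_mult_mat)
  qed (simp_all only: A X cl)
  finally show ?case .
qed

lemma pw_right:
  assumes A: "A \<in> CC" and B: "B \<in> CC" and AA: "A * A = A"
  shows "(A * B) ^\<^sub>m (Suc m) * A = (A * (B * A)) ^\<^sub>m (Suc m)"
proof (induction m)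
  case 0
  show ?case using A B by (simp add: d_assoc)
next
  case (Suc m)
  have "(A * B) ^\<^sub>m (Suc (Suc m)) * A = (A * B) ^\<^sub>m (Suc m) * (A * (B * A))"
    by (simp only: pow_mat.simps(2)[of _ "Suc m"] d_assoc A B cl)
  also have "\<dots> = ((A * B) ^\<^sub>m (Suc m) * A) * (A * (B * A))"
    by (simp only: d_assoc A B cl AA idem2[OF AA A])
  also have "\<dots> = (A * (B * A)) ^\<^sub>m (Suc (Suc m))" using Suc by simp
  finally show ?case .
qed

lemma pw_left:
  assumes A: "A \<in> CC" and B: "B \<in> CC" and AA: "A * A = A"
  shows "A * (A * B) ^\<^sub>m (Suc m) = (A * B) ^\<^sub>m (Suc m)"
proof (induction m)
  case 0
  show ?case using A B by (simp add: idem2[OF AA A])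
next
  case (Suc m)
  have "A * (A * B) ^\<^sub>m (Suc (Suc m)) = (A * (A * B) ^\<^sub>m (Suc m)) * (A * B)"
    by (simp only: pow_mat.simps(2)[of _ "Suc m"] d_assoc A B cl)
  also have "\<dots> = (A * B) ^\<^sub>m (Suc (Suc m))" using Suc by simp
  finally show ?case .
qed

lemma tr_pow_X:
  assumes A: "A \<in> CC" and B: "B \<in> CC" and AA: "A * A = A"
  shows "mat_trace ((A * B) ^\<^sub>m (Suc m)) = mat_trace ((A * (B * A)) ^\<^sub>m (Suc m))"
proof -
  have "mat_trace ((A * B) ^\<^sub>m (Suc m)) = mat_trace (A * (A * B) ^\<^sub>m (Suc m))"
    using pw_left[OF A B AA] by simp
  also have "\<dots> = mat_trace ((A * B) ^\<^sub>m (Suc m) * A)"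
    by (rule trace_comm[of A N N]) (use A B in auto)
  also have "\<dots> = mat_trace ((A * (B * A)) ^\<^sub>m (Suc m))" using pw_right[OF A B AA] by simp
  finally show ?thesis .
qed

lemma pw_BA:
  assumes A: "A \<in> CC" and B: "B \<in> CC"
  shows "(B * A) ^\<^sub>m (Suc m) = B * ((A * B) ^\<^sub>m m * A)"
proof (induction m)
  case 0
  show ?case using A B by simp
next
  case (Suc m)
  have "(B * A) ^\<^sub>m (Suc (Suc m)) = B * ((A * B) ^\<^sub>m m * A) * (B * A)"
    using Suc by simp
  also have "\<dots> = B * ((A * B) ^\<^sub>m (Suc m) * A)"
    by (simp only: pow_mat.simps(2)[of _ m] d_assoc A B cl)
  finally show ?case .
qed

lemma tr_pow_swap:
  assumes A: "A \<in> CC" and B: "B \<in> CC"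
  shows "mat_trace ((B * A) ^\<^sub>m m) = mat_trace ((A * B) ^\<^sub>m m)"
proof (cases m)
  case 0
  then show ?thesis using A B by simp
next
  case (Suc k)
  have "mat_trace ((B * A) ^\<^sub>m (Suc k)) = mat_trace (B * ((A * B) ^\<^sub>m k * A))"
    using pw_BA[OF A B] by simp
  also have "\<dots> = mat_trace (((A * B) ^\<^sub>m k * A) * B)"
    by (rule trace_comm[of B N N]) (use A B in auto)
  also have "\<dots> = mat_trace ((A * B) ^\<^sub>m (Suc k))"
    by (simp only: pow_mat.simps(2)[of _ k] d_assoc A B cl)
  finally show ?thesis using Suc by simp
qed


lemma D3:
  assumes A: "A \<in> CC" and B: "B \<in> CC" and AA: "A * A = A" and BB: "B * B = B"
  and H: "A * (B * A) - B * (A * B) = q \<cdot>\<^sub>m (A - B)"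
  shows "(A - B) * ((A - B) * (A - B)) = (1 - q) \<cdot>\<^sub>m (A - B)"
proof -
  have AA2: "\<And>Y. Y \<in> CC \<Longrightarrow> A * (A * Y) = A * Y" using idem2[OF AA A] .
  have BB2: "\<And>Y. Y \<in> CC \<Longrightarrow> B * (B * Y) = B * Y" using idem2[OF BB B] .
  show ?thesis
  proof (rule entry_eqI)
    fix i j assume ij: "i < N" "j < N"
    from entry_of[OF H, of i j] 
    show "((A - B) * ((A - B) * (A - B))) $$ (i,j) = ((1 - q) \<cdot>\<^sub>m (A - B)) $$ (i,j)"
      by (simp only: dist AA AA2 BB BB2 A B cl ent ij) (simp add: algebra_simps del: index_mult_mat)
  qed (simp_all only: A B cl)
qed

lemma DD:
  assumes A: "A \<in> CC" and B: "B \<in> CC" and AA: "A * A = A" and BB: "B * B = B"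
  shows "(A - B) * (A - B) = A - A * B - B * A + B"
proof (rule entry_eqI)
  fix i j assume ij: "i < N" "j < N"
  show "((A - B) * (A - B)) $$ (i,j) = (A - A * B - B * A + B) $$ (i,j)"
    by (simp only: dist AA BB A B cl ent ij) (simp add: algebra_simps del: index_mult_mat)
qed (simp_all only: A B cl)

lemma rank_rel:
  assumes A: "A \<in> CC" and B: "B \<in> CC" and AA: "A * A = A" and BB: "B * B = B"
  and hA: "mat_adjoint A = A" and hB: "mat_adjoint B = B"
  and tr: "mat_trace A = mat_trace B"
  and H: "A * (B * A) - B * (A * B) = q \<cdot>\<^sub>m (A - B)"
  shows "(1 - q) * of_nat (vec_space.rank N (A - B)) = 2 * (mat_trace A - mat_trace (A * B))"
proof -
  define D where "D = A - B"
  have D: "D \<in> CC" unfolding D_def using A B by simp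
  have D3: "D * (D * D) = (1 - q) \<cdot>\<^sub>m D" unfolding D_def by (rule D3[OF A B AA BB H])
  have hD: "mat_adjoint D = D" unfolding D_def using adj_minus[OF A B] hA hB by simp
  have trAB: "mat_trace (B * A) = mat_trace (A * B)" by (rule trace_comm[of B N N]) (use A B in auto)
  have trD2: "mat_trace (D * D) = 2 * (mat_trace A - mat_trace (A * B))"
  proof -
    have "mat_trace (D * D) = mat_trace (A - A * B - B * A + B)" unfolding D_def using DD[OF A B AA BB] by simp
    also have "\<dots> = mat_trace A - mat_trace (A * B) - mat_trace (B * A) + mat_trace B"
      using A B by (simp add: trace_add[of _ N] trace_minus[of _ N])
    finally show ?thesis using trAB tr by simp
  qed
  show ?thesis
  proof (cases "q = 1")
    case True
    then have D30: "D * (D * D) = 0\<^sub>m N N" using D3 D by (intro entry_eqI) auto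
    define F where "F = D * D"
    have F: "F \<in> CC" unfolding F_def using D by simp
    have hF: "mat_adjoint F = F" unfolding F_def using adj_mult[OF D D] hD by simp
    have "F * mat_adjoint F = F * F" using hF by simp
    also have "\<dots> = D * (D * (D * D))" unfolding F_def by (simp only: d_assoc D cl)
    also have "\<dots> = 0\<^sub>m N N" using D30 D by simp
    finally have "F = 0\<^sub>m N N" using frob[OF F] by (simp add: trace_zero)
    then have "D * mat_adjoint D = 0\<^sub>m N N" using hD F_def by simp
    then have D0: "D = 0\<^sub>m N N" using frob[OF D] by (simp add: trace_zero)
    have "vec_space.rank N D = 0" unfolding D0 by (rule vec_space.rank_0I)
    moreover have "mat_trace (D * D) = 0" unfolding D0 by (simp add: trace_zero)
    ultimately show ?thesis using trD2 True D_def by simp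
  next
    case False
    define c where "c = 1 / (1 - q)"
    have c: "c * (1 - q) = 1" unfolding c_def using False by simp
    have c': "(1 - q) * c = 1" unfolding c_def using False by simp
    define E where "E = c \<cdot>\<^sub>m (D * D)"
    have E: "E \<in> CC" unfolding E_def using D by simp
    have EE: "E * E = E"
    proof -
      have "E * E = (c * c) \<cdot>\<^sub>m (D * (D * (D * D)))" unfolding E_def by (simp only: dist D cl)
      also have "\<dots> = (c * (c * (1 - q))) \<cdot>\<^sub>m (D * D)" unfolding D3 by (simp only: dist D cl mult.assoc)
      finally show ?thesis unfolding E_def c by simp
    qed
    have rE: "of_nat (vec_space.rank N E) = mat_trace E" by (rule vec_space.rank_idem[OF E EE])
    have r1: "vec_space.rank N D = vec_space.rank N (D * D)"
    proof (rule vec_space.rank_eq_mult[OF D cl_mult[OF D D]])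
      show "D = D * D * (c \<cdot>\<^sub>m D)"
        by (simp only: dist D cl D3 c c' one_smult_mat')
    qed (use D in auto)
    have r2: "vec_space.rank N (D * D) = vec_space.rank N E"
    proof (rule vec_space.rank_eq_mult[OF cl_mult[OF D D] E])
      show "D * D = E * ((1 - q) \<cdot>\<^sub>m 1\<^sub>m N)" unfolding E_def
        by (simp only: dist D cl c c' one_smult_mat')
      show "E = D * D * (c \<cdot>\<^sub>m 1\<^sub>m N)" unfolding E_def
        by (simp only: dist D cl)
    qed (use D in auto)
    have "(1 - q) * of_nat (vec_space.rank N (A - B)) = (1 - q) * mat_trace E"
      using r1 r2 rE D_def by simp
    also have "\<dots> = mat_trace (D * D)" unfolding E_def using D c
      by (simp add: trace_smult[of _ N] mult.assoc[symmetric] mult.commute[of "1 - q"])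
    finally show ?thesis using trD2 by simp
  qed
qed

lemma part_a_abs:
  assumes A: "A \<in> CC" and B: "B \<in> CC" and AA: "A * A = A" and BB: "B * B = B"
  and hA: "mat_adjoint A = A" and hB: "mat_adjoint B = B"
  and tr: "mat_trace A = mat_trace B"
  and H: "A * (B * A) - B * (A * B) = q \<cdot>\<^sub>m (A - B)"
  shows "mat_trace ((A * B) ^\<^sub>m (Suc m)) = mat_trace A + (q ^ (Suc m) - 1) * of_nat (vec_space.rank N (A - B)) / 2"
proof -
  define X where "X = A * (B * A)"
  have X: "X \<in> CC" unfolding X_def using A B by simp
  have AX: "A * X = X" unfolding X_def using idem2[OF AA A] A B by simp
  have XX: "X * X = (1 + q) \<cdot>\<^sub>m X - q \<cdot>\<^sub>m A"
    unfolding X_def using X2[OF A B AA BB H] by (simp only: d_assoc A B cl AA idem2[OF AA A])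
  have trX: "mat_trace X = mat_trace (A * B)"
  proof -
    have "mat_trace X = mat_trace ((B * A) * A)" unfolding X_def by (rule trace_comm[of A N N]) (use A B in auto)
    also have "\<dots> = mat_trace (B * A)" using A B AA by (simp add: d_assoc)
    also have "\<dots> = mat_trace (A * B)" by (rule trace_comm[of B N N]) (use A B in auto)
    finally show ?thesis .
  qed
  have "mat_trace ((A * B) ^\<^sub>m (Suc m)) = mat_trace (X ^\<^sub>m (Suc m))"
    unfolding X_def by (rule tr_pow_X[OF A B AA])
  also have "\<dots> = mat_trace (A - ssum q (Suc m) \<cdot>\<^sub>m (A - X))" using Xpow[OF A X AX XX] by simp
  also have "\<dots> = mat_trace A - ssum q (Suc m) * (mat_trace A - mat_trace (A * B))"
    using A X trX by (simp add: trace_minus[of _ N] trace_smult[of _ N])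
  also have "\<dots> = mat_trace A - ssum q (Suc m) * ((1 - q) * of_nat (vec_space.rank N (A - B)) / 2)"
    using rank_rel[OF A B AA BB hA hB tr H] by simp
  also have "\<dots> = mat_trace A - (ssum q (Suc m) * (1 - q)) * of_nat (vec_space.rank N (A - B)) / 2"
    by (simp add: algebra_simps)
  also have "\<dots> = mat_trace A + (q ^ (Suc m) - 1) * of_nat (vec_space.rank N (A - B)) / 2"
    unfolding ssum_closed by (rule aux_half)
  finally show ?thesis .
qed


lemma Lb:
  assumes A: "A \<in> CC" and B: "B \<in> CC" and AA: "A * A = A" and BB: "B * B = B"
  and hA: "mat_adjoint A = A" and hB: "mat_adjoint B = B" and q: "cnj q = q"
  and T: "\<And>m. m \<in> {1,2,3} \<Longrightarrow> mat_trace ((A * B) ^\<^sub>m m) = mat_trace A + (q ^ m - 1) * k"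
  shows "A * (B * A) - A * (B * (A * B)) = q \<cdot>\<^sub>m (A - A * B)"
    and "A * (B * A) - B * (A * (B * A)) = q \<cdot>\<^sub>m (A - B * A)"
proof -
  have AA2: "\<And>Y. Y \<in> CC \<Longrightarrow> A * (A * Y) = A * Y" using idem2[OF AA A] .
  have BB2: "\<And>Y. Y \<in> CC \<Longrightarrow> B * (B * Y) = B * Y" using idem2[OF BB B] .
  define X where "X = A * (B * A)"
  have X: "X \<in> CC" unfolding X_def using A B by simp
  define t where "t = mat_trace A"
  have T1: "mat_trace X = t + (q - 1) * k"
  proof -
    have "mat_trace X = mat_trace (X ^\<^sub>m (Suc 0))" using X by simp
    also have "\<dots> = mat_trace ((A * B) ^\<^sub>m (Suc 0))" unfolding X_def by (rule tr_pow_X[OF A B AA, symmetric])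
    finally show ?thesis using T[of 1] t_def by simp
  qed
  have T2: "mat_trace (X * X) = t + (q^2 - 1) * k"
  proof -
    have "mat_trace (X * X) = mat_trace (X ^\<^sub>m (Suc 1))" using X by simp
    also have "\<dots> = mat_trace ((A * B) ^\<^sub>m (Suc 1))" unfolding X_def by (rule tr_pow_X[OF A B AA, symmetric])
    finally show ?thesis using T[of 2] t_def by (simp add: numeral_2_eq_2)
  qed
  have T3: "mat_trace (X * (X * X)) = t + (q^3 - 1) * k"
  proof -
    have "mat_trace (X * (X * X)) = mat_trace (X ^\<^sub>m (Suc 2))" using X by (simp add: numeral_2_eq_2 d_assoc)
    also have "\<dots> = mat_trace ((A * B) ^\<^sub>m (Suc 2))" unfolding X_def by (rule tr_pow_X[OF A B AA, symmetric])
    finally show ?thesis using T[of 3] t_def by (simp add: numeral_3_eq_3)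
  qed
  define Y where "Y = q^2 \<cdot>\<^sub>m A - (2*q + q^2) \<cdot>\<^sub>m X + (1 + 2*q) \<cdot>\<^sub>m (X * X) - X * (X * X)"
  have trY: "mat_trace Y = 0"
  proof -
    have "mat_trace Y = q^2 * t - (2*q + q^2) * mat_trace X + (1 + 2*q) * mat_trace (X * X) - mat_trace (X * (X * X))"
      unfolding Y_def t_def using A X by (simp add: trace_minus[of _ N] trace_add[of _ N] trace_smult[of _ N])
    also have "\<dots> = 0" unfolding T1 T2 T3 by (rule poly_id)
    finally show ?thesis .
  qed
  define C where "C = A - A * B"
  define K where "K = X - q \<cdot>\<^sub>m A"
  define G where "G = K * C"
  have C: "C \<in> CC" and K: "K \<in> CC" and G: "G \<in> CC" unfolding C_def K_def G_def using A B X by auto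
  have adjX: "mat_adjoint X = X" unfolding X_def
    using adj_mult[OF A cl_mult[OF B A]] adj_mult[OF B A] hA hB A B by (simp add: d_assoc)
  have adjK: "mat_adjoint K = K" unfolding K_def using adj_minus[OF X cl_smult[OF A]] adjX adj_smult hA q by simp
  have adjC: "mat_adjoint C = A - B * A" unfolding C_def using adj_minus[OF A cl_mult[OF A B]] adj_mult[OF A B] hA hB by simp
  have adjG: "mat_adjoint G = (A - B * A) * K" unfolding G_def using adj_mult[OF K C] adjK adjC by simp
  have GG: "G * mat_adjoint G = Y"
  proof (rule entry_eqI)
    fix i j assume ij: "i < N" "j < N"
    show "(G * mat_adjoint G) $$ (i,j) = Y $$ (i,j)"
      unfolding adjG unfolding G_def K_def C_def Y_def X_def
      by (simp only: dist AA AA2 BB BB2 A B cl ent ij) (simp add: algebra_simps power2_eq_square del: index_mult_mat)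
  qed (use G Y_def A X in simp_all)
  have G0: "G = 0\<^sub>m N N" using frob[OF G] GG trY by simp
  then have G0': "mat_adjoint G = 0\<^sub>m N N" by (auto intro!: eq_matI)
  show "A * (B * A) - A * (B * (A * B)) = q \<cdot>\<^sub>m (A - A * B)"
  proof (rule entry_eqI)
    fix i j assume ij: "i < N" "j < N"
    from entry_of[OF G0, of i j]
    show "(A * (B * A) - A * (B * (A * B))) $$ (i,j) = (q \<cdot>\<^sub>m (A - A * B)) $$ (i,j)"
      unfolding G_def K_def C_def X_def
      by (simp only: dist AA AA2 BB BB2 A B cl ent ij) (simp add: algebra_simps del: index_mult_mat)
  qed (use A B in simp_all)
  show "A * (B * A) - B * (A * (B * A)) = q \<cdot>\<^sub>m (A - B * A)"
  proof (rule entry_eqI)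
    fix i j assume ij: "i < N" "j < N"
    from entry_of[OF G0', of i j]
    show "(A * (B * A) - B * (A * (B * A))) $$ (i,j) = (q \<cdot>\<^sub>m (A - B * A)) $$ (i,j)"
      unfolding adjG K_def X_def
      by (simp only: dist AA AA2 BB BB2 A B cl ent ij) (simp add: algebra_simps del: index_mult_mat)
  qed (use A B in simp_all)
qed


lemma part_b_abs:
  assumes A: "A \<in> CC" and B: "B \<in> CC" and AA: "A * A = A" and BB: "B * B = B"
  and hA: "mat_adjoint A = A" and hB: "mat_adjoint B = B" and q: "cnj q = q"
  and tr: "mat_trace A = mat_trace B"
  and T: "\<And>m. m \<in> {1,2,3} \<Longrightarrow> mat_trace ((A * B) ^\<^sub>m m) = mat_trace A + (q ^ m - 1) * k"
  shows "A * (B * A) - B * (A * B) = q \<cdot>\<^sub>m (A - B)"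
proof -
  have T': "mat_trace ((B * A) ^\<^sub>m m) = mat_trace B + (q ^ m - 1) * k" if "m \<in> {1,2,3}" for m
    using tr_pow_swap[OF A B, of m] T[OF that] tr by simp
  have e1: "A * (B * A) - B * (A * (B * A)) = q \<cdot>\<^sub>m (A - B * A)"
    by (rule Lb(2)[OF A B AA BB hA hB q T])
  have e2: "B * (A * B) - B * (A * (B * A)) = q \<cdot>\<^sub>m (B - B * A)"
    by (rule Lb(1)[OF B A BB AA hB hA q T'])
  show ?thesis
  proof (rule entry_eqI)
    fix i j assume ij: "i < N" "j < N"
    have h1: "(A * (B * A)) $$ (i,j) - (B * (A * (B * A))) $$ (i,j) = q * (A $$ (i,j) - (B * A) $$ (i,j))"
      using entry_of[OF e1, of i j] by (simp only: A B cl ent ij)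
    have h2: "(B * (A * B)) $$ (i,j) - (B * (A * (B * A))) $$ (i,j) = q * (B $$ (i,j) - (B * A) $$ (i,j))"
      using entry_of[OF e2, of i j] by (simp only: A B cl ent ij)
    show "(A * (B * A) - B * (A * B)) $$ (i,j) = (q \<cdot>\<^sub>m (A - B)) $$ (i,j)"
      using lin_lemma[OF h1 h2] by (simp only: A B cl ent ij)
  qed (use A B in simp_all)
qed

end


theorem proposition3:
  fixes n :: nat and P :: "complex mat"
  assumes n2: "n \<ge> 2" and Pdim: "P \<in> carrier_mat (n^2) (n^2)"
  shows
   "(\<forall>Q::real. Q > 0 \<longrightarrow> is_solution n Q P \<longrightarrow> nontrivial n P \<longrightarrow>
      (\<forall>m::nat. m \<ge> 1 \<longrightarrow>
         mat_trace ((P1 n P * P2 n P) ^\<^sub>m m)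
           = of_nat (crank P * n)
             + complex_of_real ((1 / Q ^ (2*m) - 1) * (real (crank (P1 n P - P2 n P)) / 2))))
    \<and>
    ((mat_adjoint P = P \<and> P * P = P) \<longrightarrow>
     (\<forall>Q::real. \<forall>k::nat. Q > 1 \<longrightarrow> k > 0 \<longrightarrow>
       (\<forall>m\<in>{1,2,3::nat}. mat_trace ((P1 n P * P2 n P) ^\<^sub>m m)
           = of_nat (crank P * n) + complex_of_real ((1 / Q ^ (2*m) - 1) * real k)) \<longrightarrow>
       is_solution n Q P \<and> nontrivial n P))"
proof -
  have n0: "n > 0" using n2 by simp
  define N where "N = n^2 * n"
  define A where "A = P1 n P"
  define B where "B = P2 n P"
  interpret sqm N .
  have A: "A \<in> CC" unfolding A_def P1_def N_def using kron_carrier[OF Pdim one_carrier_mat[of n]] by simp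
  have B: "B \<in> CC" unfolding B_def P2_def N_def using kron_carrier[OF one_carrier_mat[of n] Pdim]
    by (simp add: mult.commute)
  have n2p: "n^2 > 0" using n0 by simp
  have trA: "mat_trace A = mat_trace P * of_nat n"
    unfolding A_def P1_def using kron_trace[OF Pdim one_carrier_mat n0] by (simp add: trace_one)
  have trB: "mat_trace B = of_nat n * mat_trace P"
    unfolding B_def P2_def using kron_trace[OF one_carrier_mat Pdim n2p] by (simp add: trace_one)
  have trAB: "mat_trace A = mat_trace B" using trA trB by simp
  have crD: "crank (A - B) = vec_space.rank N (A - B)"
    unfolding crank_def using A B by simp
  have idem: "A * A = A \<and> B * B = B" if PP: "P * P = P"
  proof
    show "A * A = A" unfolding A_def P1_def
      using kron_mult[OF Pdim one_carrier_mat Pdim one_carrier_mat n0 n0 n0] PP by simp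
    show "B * B = B" unfolding B_def P2_def
      using kron_mult[OF one_carrier_mat Pdim one_carrier_mat Pdim n2p n2p n2p] PP by simp
  qed
  have herm: "mat_adjoint A = A \<and> mat_adjoint B = B" if hP: "mat_adjoint P = P"
  proof
    show "mat_adjoint A = A" unfolding A_def P1_def
      using adj_kron[OF Pdim one_carrier_mat n0 n0] hP by (simp add: adj_one)
    show "mat_adjoint B = B" unfolding B_def P2_def
      using adj_kron[OF one_carrier_mat Pdim n2p n2p] hP by (simp add: adj_one)
  qed
  have crP: "of_nat (crank P * n) = mat_trace A" if PP: "P * P = P"
  proof -
    have "of_nat (crank P) = mat_trace P" unfolding crank_def using Pdim vec_space.rank_idem[OF Pdim PP] by simp
    then show ?thesis using trA by simp
  qed
  show ?thesis
  proof (intro conjI allI impI ballI)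
    fix Q :: real and m :: nat
    assume Q: "Q > 0" and sol: "is_solution n Q P" and nt: "nontrivial n P" and m: "m \<ge> 1"
    have hP: "mat_adjoint P = P" and PP: "P * P = P"
      and H0: "(complex_of_real Q)^2 \<cdot>\<^sub>m (A * B * A - B * A * B) = A - B"
      using sol unfolding is_solution_def A_def B_def by auto
    define q where "q = complex_of_real (1 / Q^2)"
    have qQ: "q * (complex_of_real Q)^2 = 1" unfolding q_def using Q by (simp add: field_simps)
    have AA: "A * A = A" and BB: "B * B = B" using idem[OF PP] by auto
    have hA: "mat_adjoint A = A" and hB: "mat_adjoint B = B" using herm[OF hP] by auto
    have H: "A * (B * A) - B * (A * B) = q \<cdot>\<^sub>m (A - B)"
    proof (rule entry_eqI)
      fix i j assume ij: "i < N" "j < N"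
      have h: "(complex_of_real Q)^2 * (A * (B * A) - B * (A * B)) $$ (i,j) = (A - B) $$ (i,j)"
        using entry_of[OF H0, of i j] by (simp only: dist A B cl ent ij)
      have "(A * (B * A) - B * (A * B)) $$ (i,j) = (q * (complex_of_real Q)^2) * (A * (B * A) - B * (A * B)) $$ (i,j)"
        using qQ by simp
      also have "\<dots> = q * (A - B) $$ (i,j)" using h by (simp only: mult.assoc)
      finally show "(A * (B * A) - B * (A * B)) $$ (i,j) = (q \<cdot>\<^sub>m (A - B)) $$ (i,j)"
        by (simp only: A B cl ent ij)
    qed (use A B in simp_all)
    obtain m' where mm: "m = Suc m'" using m by (cases m) auto
    have "mat_trace ((A * B) ^\<^sub>m m) = mat_trace A + (q ^ m - 1) * of_nat (vec_space.rank N (A - B)) / 2"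
      unfolding mm by (rule part_a_abs[OF A B AA BB hA hB trAB H])
    moreover have "q ^ m = complex_of_real (1 / Q ^ (2 * m))" unfolding q_def
      by (simp add: power_mult power_one_over)
    ultimately have "mat_trace ((A * B) ^\<^sub>m m) = of_nat (crank P * n)
             + complex_of_real ((1 / Q ^ (2*m) - 1) * (real (crank (A - B)) / 2))"
      unfolding crD crP[OF PP] by simp
    then show "mat_trace ((P1 n P * P2 n P) ^\<^sub>m m) = of_nat (crank P * n)
             + complex_of_real ((1 / Q ^ (2*m) - 1) * (real (crank (P1 n P - P2 n P)) / 2))"
      unfolding A_def B_def .
  next
    fix Q :: real and k :: nat
    assume hPP: "mat_adjoint P = P \<and> P * P = P" and Q: "Q > 1" and k: "k > 0"
      and T0: "\<forall>m\<in>{1,2,3::nat}. mat_trace ((P1 n P * P2 n P) ^\<^sub>m m)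
           = of_nat (crank P * n) + complex_of_real ((1 / Q ^ (2*m) - 1) * real k)"
    have hP: "mat_adjoint P = P" and PP: "P * P = P" using hPP by auto
    define q where "q = complex_of_real (1 / Q^2)"
    have qQ: "q * (complex_of_real Q)^2 = 1" unfolding q_def using Q by (simp add: field_simps)
    have AA: "A * A = A" and BB: "B * B = B" using idem[OF PP] by auto
    have hA: "mat_adjoint A = A" and hB: "mat_adjoint B = B" using herm[OF hP] by auto
    have qr: "cnj q = q" unfolding q_def by simp
    have T: "mat_trace ((A * B) ^\<^sub>m m) = mat_trace A + (q ^ m - 1) * of_nat k" if mi: "m \<in> {1,2,3}" for m
    proof -
      have qm: "q ^ m = complex_of_real (1 / Q ^ (2 * m))" unfolding q_def
        by (simp add: power_mult power_one_over)
      have "mat_trace ((A * B) ^\<^sub>m m) = of_nat (crank P * n) + complex_of_real ((1 / Q ^ (2*m) - 1) * real k)"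
        using T0 mi unfolding A_def B_def by blast
      also have "complex_of_real ((1 / Q ^ (2*m) - 1) * real k) = (q ^ m - 1) * of_nat k"
        unfolding qm by simp
      finally show ?thesis unfolding crP[OF PP] .
    qed
    have H: "A * (B * A) - B * (A * B) = q \<cdot>\<^sub>m (A - B)"
      by (rule part_b_abs[OF A B AA BB hA hB qr trAB T])
    have sol: "(complex_of_real Q)^2 \<cdot>\<^sub>m (A * B * A - B * A * B) = A - B"
    proof (rule entry_eqI)
      fix i j assume ij: "i < N" "j < N"
      have h: "(A * (B * A) - B * (A * B)) $$ (i,j) = q * (A - B) $$ (i,j)"
        using entry_of[OF H, of i j] by (simp only: A B cl ent ij)
      have "((complex_of_real Q)^2 \<cdot>\<^sub>m (A * B * A - B * A * B)) $$ (i,j)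
          = (complex_of_real Q)^2 * (A * (B * A) - B * (A * B)) $$ (i,j)"
        by (simp only: dist A B cl ent ij)
      also have "\<dots> = (q * (complex_of_real Q)^2) * (A - B) $$ (i,j)" unfolding h by (simp only: ac_simps)
      finally show "((complex_of_real Q)^2 \<cdot>\<^sub>m (A * B * A - B * A * B)) $$ (i,j) = (A - B) $$ (i,j)"
        using qQ by simp
    qed (use A B in simp_all)
    show "is_solution n Q P" unfolding is_solution_def A_def[symmetric] B_def[symmetric]
      using hP PP sol by simp
    have noAB: "A * B \<noteq> A"
    proof
      assume AB: "A * B = A"
      have "mat_trace ((A * B) ^\<^sub>m 1) = mat_trace A" using AB A by simp
      then have "(q - 1) * of_nat k = 0" using T[of 1] by simp
      then have "q = 1" using k by simp
      then have q1: "1 / Q^2 = 1" unfolding q_def by (simp only: of_real_eq_1_iff)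
      have "Q^2 = 1 / (1 / Q^2)" by simp
      then have "Q^2 = 1" unfolding q1 by simp
      moreover have "Q^2 > 1" using Q by (simp add: one_less_power)
      ultimately show False by simp
    qed
    show "nontrivial n P" unfolding nontrivial_def
    proof (intro conjI notI)
      assume P0: "P = 0\<^sub>m (n^2) (n^2)"
      have "A = 0\<^sub>m N N" unfolding A_def P1_def P0 N_def by (rule kron_zero) simp
      then have "A * B = A" using B by simp
      then show False using noAB by simp
    next
      assume P1: "P = kron_mat (1\<^sub>m n) (1\<^sub>m n)"
      then have P1': "P = 1\<^sub>m (n * n)" using kron_one[OF n0] by simp
      have "A = 1\<^sub>m N" unfolding A_def P1_def P1' N_def using kron_one[OF n0, of "n * n"]
        by (simp add: power2_eq_square)
      moreover have "B = 1\<^sub>m N" unfolding B_def P2_def P1' N_def using kron_one[of "n*n" n]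
        by (simp add: power2_eq_square mult.commute n0)
      ultimately have "A * B = A" by simp
      then show False using noAB by simp
    qed
  qed
qed

end
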